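(* Let $\mathcal{U}=[k]$ be finite, let $\{\mathbf{p}_u\}_{u\in\mathcal{U}}$ be a probability table with every $\mathbf{p}_u\in(0,1)^n$ and $\sum_ip_u^{(i)}=1$, and let $d$ be a probability distribution on $\mathcal{U}$. Then the vector $(f_d(C^{(i)},C^{(j)}))_{i<j}\in\mathbb{R}^{n(n-1)/2}$ lies in $\mathrm{Co}(\mathcal{H_R})$, the interior of the convex hull of the ranking vectors.
   Context: $f_d(C^{(i)},C^{(j)})=\sum_u d(u)\,p_u^{(i)}/(p_u^{(i)}+p_u^{(j)})$ are the expert graph weights. For a permutation $r=(r_1,\dots,r_n)$ of $[n]$, the ranking vector has coordinates $f_r(C^{(i)},C^{(j)})$, $i<j$, where $f_r(C^{(r_a)},C^{(r_b)})=1$ if $a<b$ and $0$ if $a>b$. $\mathrm{Co}(\mathcal{H_R})$ is the open convex hull (interior of the convex hull, the linear ordering polytope) of the $n!$ ranking vectors in $\mathbb{R}^{n(n-1)/2}$. *)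

theory Defs
  imports "HOL-Analysis.Analysis"
begin

text \<open>Items (experts/candidates) C^(1..n) are indexed by a finite linearly ordered type 'n
  (so [n] is order-isomorphic to 'n, n = CARD('n)).
  The space R^(n(n-1)/2) with coordinates (i,j), i<j, is realised as the coordinate
  subspace pair_coords of real^('n \<times> 'n) in which all coordinates (i,j) with
  not i<j vanish; it carries the subspace topology.\<close>

definition f_d :: "(nat \<Rightarrow> real) \<Rightarrow> (nat \<Rightarrow> 'n \<Rightarrow> real) \<Rightarrow> nat \<Rightarrow> 'n \<Rightarrow> 'n \<Rightarrow> real" where
  "f_d d p k i j = (\<Sum>u=1..k. d u * p u i / (p u i + p u j))"

definition pair_coords :: "(real ^ ('n::{finite,linorder} \<times> 'n)) set" where
  "pair_coords = {x. \<forall>i j. \<not> i < j \<longrightarrow> x $ (i, j) = 0}"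

text \<open>r maps positions to items (r a = r_a); f_r(C^(r_a),C^(r_b)) = 1 iff a < b.\<close>
definition ranking_vector :: "('n::{finite,linorder} \<Rightarrow> 'n) \<Rightarrow> real ^ ('n \<times> 'n)" where
  "ranking_vector r = (\<chi> ij. case ij of (i, j) \<Rightarrow>
      if i < j then (if inv r i < inv r j then 1 else 0) else 0)"

definition ranking_vectors :: "(real ^ ('n::{finite,linorder} \<times> 'n)) set" where
  "ranking_vectors = {ranking_vector r | r. bij r}"

definition Co_HR :: "(real ^ ('n::{finite,linorder} \<times> 'n)) set" where
  "Co_HR = (top_of_set pair_coords) interior_of (convex hull ranking_vectors)"

definition expert_vector :: "(nat \<Rightarrow> real) \<Rightarrow> (nat \<Rightarrow> 'n::{finite,linorder} \<Rightarrow> real) \<Rightarrow> nat \<Rightarrow> real ^ ('n \<times> 'n)" where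
  "expert_vector d p k = (\<chi> ij. case ij of (i, j) \<Rightarrow> if i < j then f_d d p k i j else 0)"

end

theory Submission imports Defs "HOL-Combinatorics.Multiset_Permutations"
begin

fun plw :: "('a \<Rightarrow> real) \<Rightarrow> 'a list \<Rightarrow> real" where
  "plw p [] = 1"
| "plw p (x # xs) = p x / (p x + sum_list (map p xs)) * plw p xs"

fun pos :: "'a list \<Rightarrow> 'a \<Rightarrow> nat" where
  "pos [] i = 0"
| "pos (x # xs) i = (if x = i then 0 else Suc (pos xs i))"

lemma pos_nth: "i \<in> set L \<Longrightarrow> L ! pos L i = i"
  by (induction L) auto

lemma plw_pos: "(\<forall>x\<in>set L. p x > 0) \<Longrightarrow> plw p L > 0"
proof (induction L)
  case Nil then show ?case by simp
next
  case (Cons x xs)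
  have "sum_list (map p xs) \<ge> 0" using Cons.prems by (intro sum_list_nonneg) (auto intro: less_imp_le)
  then show ?case using Cons by (auto intro!: mult_pos_pos divide_pos_pos)
qed

lemma sum_perms:
  assumes "finite A" "A \<noteq> {}"
  shows "sum f (permutations_of_set A) = (\<Sum>x\<in>A. \<Sum>xs\<in>permutations_of_set (A - {x}). f (x # xs))"
proof -
  have "sum f (permutations_of_set A) = sum f (\<Union>x\<in>A. (\<lambda>xs. x # xs) ` permutations_of_set (A - {x}))"
    using permutations_of_set_nonempty[OF assms(2)] by simp
  also have "\<dots> = (\<Sum>x\<in>A. sum f ((\<lambda>xs. x # xs) ` permutations_of_set (A - {x})))"
    using assms(1) by (intro sum.UNION_disjoint) auto
  also have "\<dots> = (\<Sum>x\<in>A. \<Sum>xs\<in>permutations_of_set (A - {x}). f (x # xs))"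
    by (auto intro!: sum.cong simp: sum.reindex inj_on_def)
  finally show ?thesis .
qed

lemma head_W:
  assumes "xs \<in> permutations_of_set (S - {x})" "x \<in> S" "finite S"
  shows "p x + sum_list (map p xs) = sum p S"
proof -
  have "sum_list (map p xs) = sum p (S - {x})"
    using assms permutations_of_setD[OF assms(1)] by (simp add: sum_list_distinct_conv_sum_set)
  then show ?thesis using assms by (simp add: sum.remove)
qed

lemma PL1: "finite S \<Longrightarrow> (\<forall>x\<in>S. p x > 0) \<Longrightarrow> sum (plw p) (permutations_of_set S) = 1"
proof (induction S rule: finite_remove_induct)
  case empty then show ?case by simp
next
  case (remove A)
  have W: "sum p A > 0" using remove by (intro sum_pos) auto
  have "sum (plw p) (permutations_of_set A) = (\<Sum>x\<in>A. \<Sum>xs\<in>permutations_of_set (A - {x}). plw p (x # xs))"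
    using remove by (intro sum_perms) auto
  also have "\<dots> = (\<Sum>x\<in>A. p x / sum p A)"
  proof (intro sum.cong refl)
    fix x assume x: "x \<in> A"
    have "(\<Sum>xs\<in>permutations_of_set (A - {x}). plw p (x # xs)) = (\<Sum>xs\<in>permutations_of_set (A - {x}). p x / sum p A * plw p xs)"
      using remove x by (intro sum.cong refl) (simp add: head_W)
    also have "\<dots> = p x / sum p A * sum (plw p) (permutations_of_set (A - {x}))" by (simp add: sum_distrib_left)
    also have "\<dots> = p x / sum p A" using remove x by simp
    finally show "(\<Sum>xs\<in>permutations_of_set (A - {x}). plw p (x # xs)) = p x / sum p A" .
  qed
  also have "\<dots> = 1" using W by (simp add: sum_divide_distrib[symmetric])
  finally show ?case .
qed

lemma PL2: "finite S \<Longrightarrow> (\<forall>x\<in>S. p x > 0) \<Longrightarrow> i \<in> S \<Longrightarrow> j \<in> S \<Longrightarrow> i \<noteq> j \<Longrightarrow>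
  (\<Sum>L\<in>permutations_of_set S. plw p L * (if pos L i < pos L j then 1 else 0)) = p i / (p i + p j)"
proof (induction S rule: finite_remove_induct)
  case empty then show ?case by simp
next
  case (remove A)
  define c where "c = p i / (p i + p j)"
  have W: "sum p A > 0" using remove by (intro sum_pos) auto
  have "(\<Sum>L\<in>permutations_of_set A. plw p L * (if pos L i < pos L j then 1 else 0)) =
     (\<Sum>x\<in>A. \<Sum>xs\<in>permutations_of_set (A - {x}). plw p (x # xs) * (if pos (x # xs) i < pos (x # xs) j then 1 else 0))"
    using remove by (intro sum_perms) auto
  also have "\<dots> = (\<Sum>x\<in>A. p x / sum p A * (\<Sum>xs\<in>permutations_of_set (A - {x}). plw p xs * (if pos (x # xs) i < pos (x # xs) j then 1 else 0)))"
  proof (intro sum.cong refl)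
    fix x assume x: "x \<in> A"
    show "(\<Sum>xs\<in>permutations_of_set (A - {x}). plw p (x # xs) * (if pos (x # xs) i < pos (x # xs) j then 1 else 0)) = p x / sum p A * (\<Sum>xs\<in>permutations_of_set (A - {x}). plw p xs * (if pos (x # xs) i < pos (x # xs) j then 1 else 0))"
      unfolding sum_distrib_left using remove x by (intro sum.cong refl) (simp add: head_W)
  qed
  also have "\<dots> = (\<Sum>x\<in>A. p x / sum p A * (c + (if x = i then 1 - c else 0) - (if x = j then c else 0)))"
  proof (intro sum.cong refl)
    fix x assume x: "x \<in> A"
    have "(\<Sum>xs\<in>permutations_of_set (A - {x}). plw p xs * (if pos (x # xs) i < pos (x # xs) j then 1 else 0))
       = c + (if x = i then 1 - c else 0) - (if x = j then c else 0)"
    proof (cases "x = i \<or> x = j")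
      case True
      then show ?thesis using remove x PL1[of "A - {x}" p] by auto
    next
      case False
      then show ?thesis using remove.IH[OF x] remove.prems x by (auto simp: c_def)
    qed
    then show "p x / sum p A * (\<Sum>xs\<in>permutations_of_set (A - {x}). plw p xs * (if pos (x # xs) i < pos (x # xs) j then 1 else 0)) =
         p x / sum p A * (c + (if x = i then 1 - c else 0) - (if x = j then c else 0))" by simp
  qed
  also have "\<dots> = (c * sum p A + p i * (1 - c) - p j * c) / sum p A"
  proof -
    have e: "\<And>x. p x / sum p A * (c + (if x = i then 1 - c else 0) - (if x = j then c else 0))
        = (c * p x + (if x = i then p i * (1 - c) else 0) - (if x = j then p j * c else 0)) / sum p A"
      by (simp add: field_simps)
    show ?thesis unfolding e sum_divide_distrib[symmetric]
      using remove.prems remove.hyps by (simp add: sum.distrib sum_subtractf sum_distrib_left[symmetric] sum.delta)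
  qed
  also have "\<dots> = c"
  proof -
    have "p i + p j > 0" using remove.prems by (simp add: add_pos_pos)
    then have "p i * (1 - c) - p j * c = 0" by (simp add: c_def field_simps)
    then show ?thesis using W by simp
  qed
  finally show ?case by (simp add: c_def)
qed

lemma inj_rank:
  fixes \<sigma> :: "'n::{finite,linorder} \<Rightarrow> nat"
  assumes inj: "inj \<sigma>"
  shows "(\<chi> ij. case ij of (i, j) \<Rightarrow> if i < j then (if \<sigma> i < \<sigma> j then 1 else 0) else 0 :: real) \<in> ranking_vectors"
proof -
  define e where "e = sorted_list_of_set (UNIV::'n set)"
  define c where "c i = card {j. \<sigma> j < \<sigma> i}" for i
  define \<tau> where "\<tau> i = e ! c i" for i
  have len: "length e = CARD('n)" by (simp add: e_def)
  have c_lt: "c i < CARD('n)" for i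
  proof -
    have "{j. \<sigma> j < \<sigma> i} \<subset> UNIV" by auto
    then show ?thesis unfolding c_def by (intro psubset_card_mono) auto
  qed
  have c_mono: "\<sigma> i < \<sigma> j \<Longrightarrow> c i < c j" for i j
  proof -
    assume a: "\<sigma> i < \<sigma> j"
    have "{l. \<sigma> l < \<sigma> i} \<subset> {l. \<sigma> l < \<sigma> j}" using a by auto
    then show ?thesis unfolding c_def by (intro psubset_card_mono) auto
  qed
  have e_mono: "a < b \<Longrightarrow> b < length e \<Longrightarrow> e ! a < e ! b" for a b
    using sorted_wrt_nth_less[OF strict_sorted_list_of_set] unfolding e_def by blast
  have tau_mono: "\<sigma> i < \<sigma> j \<Longrightarrow> \<tau> i < \<tau> j" for i j
    unfolding \<tau>_def using c_mono c_lt e_mono len by metis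
  have tau_iff: "\<tau> i < \<tau> j \<longleftrightarrow> \<sigma> i < \<sigma> j" for i j
  proof
    assume a: "\<tau> i < \<tau> j"
    show "\<sigma> i < \<sigma> j"
    proof (rule ccontr)
      assume "\<not> \<sigma> i < \<sigma> j"
      then have "\<sigma> j < \<sigma> i \<or> \<sigma> i = \<sigma> j" by auto
      then show False
      proof
        assume "\<sigma> j < \<sigma> i" then show False using tau_mono[of j i] a by auto
      next
        assume "\<sigma> i = \<sigma> j" then have "i = j" using inj by (auto dest: injD)
        then show False using a by simp
      qed
    qed
  qed (rule tau_mono)
  have "inj \<tau>"
  proof (rule injI)
    fix i j assume a: "\<tau> i = \<tau> j"
    show "i = j"
    proof (rule ccontr)
      assume "i \<noteq> j"
      then have "\<sigma> i \<noteq> \<sigma> j" using inj by (auto dest: injD)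
      then have "\<sigma> i < \<sigma> j \<or> \<sigma> j < \<sigma> i" by auto
      then show False using tau_mono a by force
    qed
  qed
  then have bt: "bij \<tau>" by (simp add: bij_def finite_UNIV_inj_surj)
  define r where "r = inv \<tau>"
  have br: "bij r" unfolding r_def using bt by (rule bij_imp_bij_inv)
  have ir: "inv r = \<tau>" unfolding r_def using bt by (rule inv_inv_eq)
  have "ranking_vector r = (\<chi> ij. case ij of (i, j) \<Rightarrow> if i < j then (if \<sigma> i < \<sigma> j then 1 else 0) else 0 :: real)"
    unfolding ranking_vector_def ir using tau_iff by (simp add: fun_eq_iff split: prod.splits)
  then show ?thesis unfolding ranking_vectors_def using br
    by (intro CollectI exI[of _ r] conjI) auto
qed


theorem lemma11:
  fixes p :: "nat \<Rightarrow> 'n::{finite,linorder} \<Rightarrow> real"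
    and d :: "nat \<Rightarrow> real"
    and k :: nat
  assumes p_range: "\<forall>u\<in>{1..k}. \<forall>i. 0 < p u i \<and> p u i < 1"
    and p_sum: "\<forall>u\<in>{1..k}. (\<Sum>i\<in>UNIV. p u i) = 1"
    and d_nonneg: "\<forall>u\<in>{1..k}. 0 \<le> d u"
    and d_sum: "(\<Sum>u=1..k. d u) = 1"
  shows "expert_vector d p k \<in> Co_HR"
proof -
  define A where "A = permutations_of_set (UNIV::'n set)"
  define vL where "vL L = (\<chi> ij. case ij of (i, j) \<Rightarrow> if i < j then (if pos L i < pos L j then 1 else 0) else 0 :: real)" for L :: "'n list"
  define lam where "lam L = (\<Sum>u=1..k. d u * plw (p u) L)" for L
  define H where "H = convex hull (ranking_vectors :: (real^('n\<times>'n)) set)"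
  define x where "x = expert_vector d p k"
  have finA: "finite A" by (simp add: A_def)
  have AI: "set L = UNIV \<Longrightarrow> distinct L \<Longrightarrow> L \<in> A" for L unfolding A_def by auto
  have AD: "L \<in> A \<Longrightarrow> set L = UNIV \<and> distinct L" for L unfolding A_def permutations_of_set_def by auto
  obtain L0 where "set L0 = (UNIV::'n set)" "distinct L0" using finite_distinct_list[of "UNIV::'n set"] by auto
  then have L0: "L0 \<in> A" using AI by blast
  have vH: "vL L \<in> H" if L: "L \<in> A" for L
  proof -
    have "inj (pos L)"
    proof (rule injI)
      fix a b assume "pos L a = pos L b"
      moreover have "a \<in> set L" "b \<in> set L" using AD[OF L] by auto
      ultimately show "a = b" using pos_nth[of a L] pos_nth[of b L] by metis
    qed
    from inj_rank[OF this] have "vL L \<in> ranking_vectors" unfolding vL_def .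
    then show ?thesis unfolding H_def by (rule hull_inc)
  qed
  obtain u0 where u0: "u0 \<in> {1..k}" "d u0 > 0"
  proof (rule ccontr)
    assume "\<not> thesis"
    with that have "\<forall>u\<in>{1..k}. d u = 0" using d_nonneg by force
    then show False using d_sum by simp
  qed
  have plw_pos': "u \<in> {1..k} \<Longrightarrow> plw (p u) L > 0" for u L
    using p_range by (intro plw_pos) auto
  have lam_pos: "lam L > 0" for L
  proof -
    have "d u0 * plw (p u0) L \<le> lam L"
      unfolding lam_def using d_nonneg plw_pos'
      by (intro member_le_sum[OF u0(1)] mult_nonneg_nonneg) (auto intro: less_imp_le)
    moreover have "d u0 * plw (p u0) L > 0" using u0 plw_pos' by auto
    ultimately show ?thesis by linarith
  qed
  have lam_sum: "sum lam A = 1"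
  proof -
    have "sum lam A = (\<Sum>u=1..k. d u * sum (plw (p u)) A)"
      unfolding lam_def by (subst sum.swap) (simp add: sum_distrib_left)
    also have "\<dots> = (\<Sum>u=1..k. d u)"
      unfolding A_def using p_range by (intro sum.cong refl) (subst PL1, auto)
    finally show ?thesis using d_sum by simp
  qed
  have x_eq: "x = (\<Sum>L\<in>A. lam L *\<^sub>R vL L)"
  proof (subst vec_eq_iff, intro allI)
    fix ij :: "'n \<times> 'n"
    obtain i j where ij: "ij = (i, j)" by (cases ij)
    show "x $ ij = (\<Sum>L\<in>A. lam L *\<^sub>R vL L) $ ij"
    proof (cases "i < j")
      case False
      then show ?thesis unfolding x_def expert_vector_def vL_def ij by simp
    next
      case True
      have "(\<Sum>L\<in>A. lam L *\<^sub>R vL L) $ ij = (\<Sum>L\<in>A. lam L * (if pos L i < pos L j then 1 else 0))"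
        unfolding vL_def ij using True by simp
      also have "\<dots> = (\<Sum>u=1..k. d u * (\<Sum>L\<in>A. plw (p u) L * (if pos L i < pos L j then 1 else 0)))"
        unfolding lam_def sum_distrib_left sum_distrib_right by (subst sum.swap) (simp add: mult.assoc)
      also have "\<dots> = (\<Sum>u=1..k. d u * (p u i / (p u i + p u j)))"
        unfolding A_def using p_range True by (intro sum.cong refl) (subst PL2, auto)
      also have "\<dots> = x $ ij"
        unfolding x_def expert_vector_def ij f_d_def using True by simp
      finally show ?thesis by simp
    qed
  qed
  have xP: "x \<in> pair_coords" unfolding x_def expert_vector_def pair_coords_def by simp
  have convH: "convex H" unfolding H_def by simp
  have xH: "x \<in> H" unfolding x_eq
    using finA lam_sum lam_pos vH by (intro convex_sum[OF finA convH]) (auto intro: less_imp_le)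
  define \<mu> where "\<mu> = Min (lam ` A)"
  have \<mu>pos: "\<mu> > 0" unfolding \<mu>_def using finA L0 lam_pos by (subst Min_gr_iff) auto
  have \<mu>le: "L \<in> A \<Longrightarrow> \<mu> \<le> lam L" for L unfolding \<mu>_def using finA by simp
  define eq where "eq q = (\<chi> ij. (if ij = q then 1 else 0 :: real))" for q :: "'n \<times> 'n"
  have step: "x + s *\<^sub>R eq (a, b) \<in> H" if ab: "a < b" and s: "\<bar>s\<bar> \<le> \<mu>" for a b s
  proof -
    obtain R where R: "set R = UNIV - {a, b}" "distinct R"
      using finite_distinct_list[of "UNIV - {a, b} :: 'n set"] by auto
    define L1 where "L1 = a # b # R"
    define L2 where "L2 = b # a # R"
    have L1A: "L1 \<in> A" unfolding L1_def using R ab by (intro AI) auto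
    have L2A: "L2 \<in> A" unfolding L2_def using R ab by (intro AI) auto
    have L12: "L1 \<noteq> L2" unfolding L1_def L2_def using ab by simp
    have diff: "vL L1 - vL L2 = eq (a, b)"
    proof (subst vec_eq_iff, intro allI)
      fix ij :: "'n \<times> 'n"
      obtain i j where ij: "ij = (i, j)" by (cases ij)
      show "(vL L1 - vL L2) $ ij = eq (a, b) $ ij"
        unfolding vL_def eq_def ij L1_def L2_def using ab by auto
    qed
    define lam' where "lam' L = lam L + (if L = L1 then s else 0) - (if L = L2 then s else 0)" for L
    have e1: "(\<Sum>L\<in>A. (if L = L1 then s else 0) *\<^sub>R vL L) = s *\<^sub>R vL L1"
    proof -
      have eqL: "(\<lambda>L. (if L = L1 then s else 0) *\<^sub>R vL L) = (\<lambda>L. if L = L1 then s *\<^sub>R vL L else 0)" by auto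
      show ?thesis unfolding eqL using finA L1A by (simp add: sum.delta)
    qed
    have e2: "(\<Sum>L\<in>A. (if L = L2 then s else 0) *\<^sub>R vL L) = s *\<^sub>R vL L2"
    proof -
      have eqL: "(\<lambda>L. (if L = L2 then s else 0) *\<^sub>R vL L) = (\<lambda>L. if L = L2 then s *\<^sub>R vL L else 0)" by auto
      show ?thesis unfolding eqL using finA L2A by (simp add: sum.delta)
    qed
    have "x + s *\<^sub>R eq (a, b) = (\<Sum>L\<in>A. lam' L *\<^sub>R vL L)"
      unfolding lam'_def scaleR_add_left scaleR_diff_left sum.distrib sum_subtractf e1 e2
        x_eq diff[symmetric] by (simp add: algebra_simps)
    moreover have "(\<Sum>L\<in>A. lam' L *\<^sub>R vL L) \<in> H"
    proof (rule convex_sum[OF finA convH])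
      show "sum lam' A = 1" unfolding lam'_def using finA L1A L2A lam_sum
        by (simp add: sum.distrib sum_subtractf sum.delta')
      show "0 \<le> lam' L" if "L \<in> A" for L
        using \<mu>le[OF that] s L12 unfolding lam'_def by auto
      show "vL L \<in> H" if "L \<in> A" for L using vH that .
    qed
    ultimately show ?thesis by simp
  qed
  define Q where "Q = {q :: 'n \<times> 'n. fst q < snd q}"
  have finQ: "finite Q" by simp
  have decomp: "z = (\<Sum>q\<in>Q. z $ q *\<^sub>R eq q)" if z: "z \<in> pair_coords" for z
  proof (subst vec_eq_iff, intro allI)
    fix ij :: "'n \<times> 'n"
    have "(\<Sum>q\<in>Q. z $ q *\<^sub>R eq q) $ ij = (\<Sum>q\<in>Q. z $ q * (if ij = q then 1 else 0))"
      unfolding eq_def by simp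
    also have "\<dots> = (\<Sum>q\<in>Q. if ij = q then z $ ij else 0)"
      by (intro sum.cong refl) auto
    also have "\<dots> = (if ij \<in> Q then z $ ij else 0)"
      using finQ by (simp add: sum.delta')
    finally have "(\<Sum>q\<in>Q. z $ q *\<^sub>R eq q) $ ij = (if ij \<in> Q then z $ ij else 0)" .
    then show "z $ ij = (\<Sum>q\<in>Q. z $ q *\<^sub>R eq q) $ ij"
      using z unfolding pair_coords_def Q_def by (cases ij) auto
  qed
  have "x \<in> (top_of_set pair_coords) interior_of H"
  proof (cases "Q = {}")
    case True
    have "pair_coords \<inter> ball x 1 \<subseteq> H"
    proof
      fix y assume y: "y \<in> pair_coords \<inter> ball x 1"
      have "y = x"
      proof (subst vec_eq_iff, intro allI)
        fix ij :: "'n \<times> 'n"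
        obtain i j where ij: "ij = (i, j)" by (cases ij)
        have "\<not> i < j" using True unfolding Q_def by auto
        then show "y $ ij = x $ ij" using y xP unfolding pair_coords_def ij by auto
      qed
      then show "y \<in> H" using xH by simp
    qed
    then show ?thesis unfolding interior_of_def using xP
      by (intro CollectI exI[of _ "pair_coords \<inter> ball x 1"]) auto
  next
    case False
    define M where "M = real (card Q)"
    have Mpos: "M > 0" unfolding M_def using False finQ by (simp add: card_gt_0_iff)
    define \<epsilon> where "\<epsilon> = \<mu> / M"
    have \<epsilon>pos: "\<epsilon> > 0" unfolding \<epsilon>_def using Mpos \<mu>pos by simp
    have "pair_coords \<inter> ball x \<epsilon> \<subseteq> H"
    proof
      fix y assume y: "y \<in> pair_coords \<inter> ball x \<epsilon>"
      define z where "z = y - x"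
      have zP: "z \<in> pair_coords" using y xP unfolding z_def pair_coords_def by auto
      have nz: "norm z < \<epsilon>" using y unfolding z_def by (simp add: dist_norm norm_minus_commute)
      have "(\<Sum>q\<in>Q. (1 / M) *\<^sub>R (x + (M * z $ q) *\<^sub>R eq q)) = (\<Sum>q\<in>Q. (1 / M) *\<^sub>R x) + (\<Sum>q\<in>Q. z $ q *\<^sub>R eq q)"
        using Mpos by (simp add: sum.distrib scaleR_add_right)
      also have "(\<Sum>q\<in>Q. (1 / M) *\<^sub>R x) = (\<Sum>q\<in>Q. 1 / M) *\<^sub>R x"
        by (simp only: scaleR_sum_left)
      also have "(\<Sum>q\<in>Q. 1 / M) *\<^sub>R x = x"
        using Mpos False by (simp add: M_def)
      also have "(\<Sum>q\<in>Q. z $ q *\<^sub>R eq q) = z" using decomp[OF zP] by simp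
      finally have yeq: "y = (\<Sum>q\<in>Q. (1 / M) *\<^sub>R (x + (M * z $ q) *\<^sub>R eq q))" unfolding z_def by simp
      show "y \<in> H" unfolding yeq
      proof (rule convex_sum[OF finQ convH])
        show "(\<Sum>q\<in>Q. 1 / M) = 1" using Mpos False by (simp add: M_def)
        show "0 \<le> 1 / M" for q using Mpos by simp
        show "x + (M * z $ q) *\<^sub>R eq q \<in> H" if q: "q \<in> Q" for q
        proof -
          obtain a b where qab: "q = (a, b)" by (cases q)
          have ab: "a < b" using q unfolding Q_def qab by simp
          have "\<bar>z $ q\<bar> < \<epsilon>" using component_le_norm_cart[of z q] nz by linarith
          then have "M * \<bar>z $ q\<bar> < \<mu>" unfolding \<epsilon>_def using Mpos by (simp add: field_simps)
          then have "\<bar>M * z $ q\<bar> \<le> \<mu>" using Mpos by (simp add: abs_mult)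
          then show ?thesis unfolding qab using step[OF ab] by blast
        qed
      qed
    qed
    then show ?thesis unfolding interior_of_def using xP \<epsilon>pos
      by (intro CollectI exI[of _ "pair_coords \<inter> ball x \<epsilon>"]) auto
  qed
  then show ?thesis unfolding Co_HR_def x_def H_def .
qed

end
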